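(* For each natural number $n\ge 1$: (i) the total domination polynomial of the $n$-book graph $B_n$ is unimodal; (ii) the total domination polynomial of the generalized friendship graph $F_{n,4}$ is unimodal.
   Context: The $n$-book graph $B_n$ is obtained by taking $n$ copies of the cycle $C_4$ that all share one common edge $\{u,v\}$. The generalized friendship graph $F_{n,q}$ consists of $n$ cycles of length $q$ sharing exactly one common vertex; $F_{n,4}$ is the case $q=4$. For a finite simple graph $G=(V,E)$, a set $D\subseteq V$ is a total dominating set if every vertex of $V$ is adjacent to some vertex of $D$; $d_t(G,i)$ is the number of total dominating sets of size $i$, and $D_t(G,x)=\sum_{i} d_t(G,i)x^i$. A polynomial $\sum a_ix^i$ is unimodal if $a_0\le\dots\le a_k\ge a_{k+1}\ge\dots\ge a_N$ for some $k$. *)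

theory Defs
  imports Main "HOL-Computational_Algebra.Polynomial"
begin

text \<open>A graph is given by a finite vertex set V and a symmetric irreflexive
adjacency relation adj (only its restriction to V matters).\<close>

definition total_dominating :: "'a set \<Rightarrow> ('a \<Rightarrow> 'a \<Rightarrow> bool) \<Rightarrow> 'a set \<Rightarrow> bool" where
  "total_dominating V adj D \<longleftrightarrow> D \<subseteq> V \<and> (\<forall>x\<in>V. \<exists>y\<in>D. adj x y)"

definition d_t :: "'a set \<Rightarrow> ('a \<Rightarrow> 'a \<Rightarrow> bool) \<Rightarrow> nat \<Rightarrow> nat" where
  "d_t V adj i = card {D. total_dominating V adj D \<and> card D = i}"

definition total_dom_poly :: "'a set \<Rightarrow> ('a \<Rightarrow> 'a \<Rightarrow> bool) \<Rightarrow> nat poly" where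
  "total_dom_poly V adj = (\<Sum>i\<le>card V. monom (d_t V adj i) i)"

definition unimodal :: "nat poly \<Rightarrow> bool" where
  "unimodal p \<longleftrightarrow> (\<exists>k. (\<forall>i j. i \<le> j \<and> j \<le> k \<longrightarrow> coeff p i \<le> coeff p j) \<and>
                        (\<forall>i j. k \<le> i \<and> i \<le> j \<and> j \<le> degree p \<longrightarrow> coeff p j \<le> coeff p i))"

text \<open>Shared edge BU--BV; copy i of C4 is BU -- BA i -- BB i -- BV -- BU.\<close>

datatype book_vertex = BU | BV | BA nat | BB nat

definition book_verts :: "nat \<Rightarrow> book_vertex set" where
  "book_verts n = {BU, BV} \<union> BA ` {..<n} \<union> BB ` {..<n}"

fun book_edge :: "book_vertex \<Rightarrow> book_vertex \<Rightarrow> bool" where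
  "book_edge BU BV = True"
| "book_edge BU (BA i) = True"
| "book_edge (BA i) (BB j) = (i = j)"
| "book_edge (BB i) BV = True"
| "book_edge _ _ = False"

definition book_adj :: "book_vertex \<Rightarrow> book_vertex \<Rightarrow> bool" where
  "book_adj x y \<longleftrightarrow> book_edge x y \<or> book_edge y x"

text \<open>Centre FC; cycle i is FC -- FX i -- FY i -- FZ i -- FC.\<close>

datatype fr_vertex = FC | FX nat | FY nat | FZ nat

definition fr_verts :: "nat \<Rightarrow> fr_vertex set" where
  "fr_verts n = {FC} \<union> FX ` {..<n} \<union> FY ` {..<n} \<union> FZ ` {..<n}"

fun fr_edge :: "fr_vertex \<Rightarrow> fr_vertex \<Rightarrow> bool" where
  "fr_edge FC (FX i) = True"
| "fr_edge (FX i) (FY j) = (i = j)"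
| "fr_edge (FY i) (FZ j) = (i = j)"
| "fr_edge (FZ i) FC = True"
| "fr_edge _ _ = False"

definition fr_adj :: "fr_vertex \<Rightarrow> fr_vertex \<Rightarrow> bool" where
  "fr_adj x y \<longleftrightarrow> fr_edge x y \<or> fr_edge y x"

end

theory Submission
  imports Defs
begin


definition gf :: "'a set set \<Rightarrow> nat poly" where
  "gf F = (\<Sum>D\<in>F. monom 1 (card D))"

lemma tdp_gf:
  assumes "finite V"
  shows "total_dom_poly V adj = gf {D. total_dominating V adj D}"
proof -
  let ?T = "{D. total_dominating V adj D}"
  have sub: "?T \<subseteq> Pow V" by (auto simp: total_dominating_def)
  have fT: "finite ?T" by (rule finite_subset[OF sub]) (use assms in simp)
  have cardle: "card ` ?T \<subseteq> {..card V}"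
    using sub assms by (auto intro: card_mono)
  have "gf ?T = (\<Sum>i\<le>card V. \<Sum>D\<in>{D. D \<in> ?T \<and> card D = i}. monom 1 (card D))"
    unfolding gf_def by (rule sum.group[OF fT _ cardle, symmetric]) simp
  also have "\<dots> = (\<Sum>i\<le>card V. \<Sum>D\<in>{D. D \<in> ?T \<and> card D = i}. monom 1 i)"
    by (intro sum.cong refl) auto
  also have "\<dots> = (\<Sum>i\<le>card V. monom (d_t V adj i) i)"
  proof (intro sum.cong refl)
    fix i
    have "(\<Sum>D\<in>{D. D \<in> ?T \<and> card D = i}. monom (1::nat) i) = of_nat (card {D. D \<in> ?T \<and> card D = i}) * monom 1 i"
      by simp
    also have "\<dots> = monom (card {D. D \<in> ?T \<and> card D = i}) i"
      by (simp add: of_nat_poly smult_monom)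
    finally show "(\<Sum>D\<in>{D. D \<in> ?T \<and> card D = i}. monom (1::nat) i) = monom (d_t V adj i) i"
      by (simp add: d_t_def)
  qed
  finally show ?thesis by (simp add: total_dom_poly_def)
qed

lemma gf_union:
  assumes "finite A" "finite B" "A \<inter> B = {}"
  shows "gf (A \<union> B) = gf A + gf B"
  unfolding gf_def using assms by (rule sum.union_disjoint)

lemma gf_insert_image:
  assumes "finite F" "\<forall>S\<in>F. z \<notin> S \<and> finite S"
  shows "gf (insert z ` F) = monom 1 1 * gf F"
proof -
  have inj: "inj_on (insert z) F"
    using assms(2) by (auto simp: inj_on_def)
  have "gf (insert z ` F) = (\<Sum>S\<in>F. monom 1 (card (insert z S)))"
    unfolding gf_def by (simp add: sum.reindex[OF inj])
  also have "\<dots> = (\<Sum>S\<in>F. monom 1 1 * monom 1 (card S))"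
    using assms(2) by (intro sum.cong refl) (simp add: mult_monom)
  finally show ?thesis by (simp add: gf_def sum_distrib_left)
qed

lemma gf_prod:
  assumes fF: "finite F" and fG: "finite G" and sF: "\<forall>S\<in>F. S \<subseteq> X" and sG: "\<forall>T\<in>G. T \<subseteq> Y"
    and d: "X \<inter> Y = {}" and fX: "finite X" and fY: "finite Y"
  shows "gf ((\<lambda>(S,T). S \<union> T) ` (F \<times> G)) = gf F * gf G"
proof -
  have inj: "inj_on (\<lambda>(S,T). S \<union> T) (F \<times> G)"
  proof (rule inj_onI, clarify)
    fix S T S' T' assume a: "S \<in> F" "T \<in> G" "S' \<in> F" "T' \<in> G" "S \<union> T = S' \<union> T'"
    have "S = (S \<union> T) \<inter> X" "S' = (S' \<union> T') \<inter> X" "T = (S \<union> T) \<inter> Y" "T' = (S' \<union> T') \<inter> Y"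
      using a sF sG d by blast+
    then show "S = S' \<and> T = T'" using a(5) by metis
  qed
  have cd: "card (S \<union> T) = card S + card T" if "S \<in> F" "T \<in> G" for S T
  proof (rule card_Un_disjoint)
    show "finite S" using that sF fX finite_subset by blast
    show "finite T" using that sG fY finite_subset by blast
    show "S \<inter> T = {}" using that sF sG d by blast
  qed
  have "gf ((\<lambda>(S,T). S \<union> T) ` (F \<times> G)) = (\<Sum>(S,T)\<in>F \<times> G. monom 1 (card (S \<union> T)))"
    unfolding gf_def by (subst sum.reindex[OF inj]) (simp add: case_prod_beta)
  also have "\<dots> = (\<Sum>(S,T)\<in>F \<times> G. monom 1 (card S) * monom 1 (card T))"
    by (intro sum.cong refl) (auto simp: cd mult_monom)
  also have "\<dots> = (\<Sum>S\<in>F. \<Sum>T\<in>G. monom 1 (card S) * monom 1 (card T))"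
    by (rule sum.cartesian_product[symmetric])
  also have "\<dots> = gf F * gf G"
    by (simp add: gf_def sum_product)
  finally show ?thesis .
qed

lemma gf_pages:
  fixes pg :: "nat \<Rightarrow> 'a set" and ok :: "nat \<Rightarrow> 'a set \<Rightarrow> bool"
  assumes fin: "\<And>i. finite (pg i)" and disj: "\<And>i j. i \<noteq> j \<Longrightarrow> pg i \<inter> pg j = {}"
    and w: "\<And>i. gf {T. T \<subseteq> pg i \<and> ok i T} = w"
  shows "gf {S. S \<subseteq> (\<Union>i<n. pg i) \<and> (\<forall>i<n. ok i (S \<inter> pg i))} = w ^ n"
proof (induction n)
  case 0
  have "{S. S \<subseteq> (\<Union>i<0. pg i) \<and> (\<forall>i<0. ok i (S \<inter> pg i))} = {{}}" by auto
  then show ?case by (simp add: gf_def one_pCons monom_0)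
next
  case (Suc n)
  let ?G = "\<lambda>n. {S. S \<subseteq> (\<Union>i<n. pg i) \<and> (\<forall>i<n. ok i (S \<inter> pg i))}"
  let ?P = "{T. T \<subseteq> pg n \<and> ok n T}"
  have fU: "finite (\<Union>i<n. pg i)" using fin by simp
  have dU: "(\<Union>i<n. pg i) \<inter> pg n = {}"
  proof -
    { fix x i assume "i < n" "x \<in> pg i" "x \<in> pg n"
      then have False using disj[of i n] by auto }
    then show ?thesis by blast
  qed
  have eq: "?G (Suc n) = (\<lambda>(S,T). S \<union> T) ` (?G n \<times> ?P)"
  proof (intro equalityI subsetI)
    fix D assume D: "D \<in> ?G (Suc n)"
    let ?S = "D - pg n" and ?T = "D \<inter> pg n"
    have "?S \<in> ?G n"
    proof -
      have "?S \<subseteq> (\<Union>i<n. pg i)" using D by (auto simp: lessThan_Suc)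
      moreover have "ok i (?S \<inter> pg i)" if "i < n" for i
      proof -
        have "?S \<inter> pg i = D \<inter> pg i" using disj[of i n] that by auto
        then show ?thesis using D that by auto
      qed
      ultimately show ?thesis by blast
    qed
    moreover have "?T \<in> ?P" using D by auto
    moreover have "D = ?S \<union> ?T" by blast
    ultimately show "D \<in> (\<lambda>(S,T). S \<union> T) ` (?G n \<times> ?P)" by (auto intro!: image_eqI[where x="(?S,?T)"])
  next
    fix D assume "D \<in> (\<lambda>(S,T). S \<union> T) ` (?G n \<times> ?P)"
    then obtain S T where ST: "S \<in> ?G n" "T \<in> ?P" "D = S \<union> T" by auto
    have "D \<subseteq> (\<Union>i<Suc n. pg i)" using ST by (auto simp: lessThan_Suc)
    moreover have "ok i (D \<inter> pg i)" if "i < Suc n" for i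
    proof (cases "i = n")
      case True
      have "D \<inter> pg n = T" using ST dU by auto
      then show ?thesis using ST True by auto
    next
      case False
      then have "i < n" using that by simp
      have "pg i \<inter> pg n = {}" using disj False by auto
      then have "D \<inter> pg i = S \<inter> pg i" using ST by auto
      then show ?thesis using ST \<open>i < n\<close> by auto
    qed
    ultimately show "D \<in> ?G (Suc n)" by blast
  qed
  have "gf (?G (Suc n)) = gf (?G n) * gf ?P"
    unfolding eq
  proof (rule gf_prod[where X = "\<Union>i<n. pg i" and Y = "pg n"])
    show "finite (?G n)" by (rule finite_subset[of _ "Pow (\<Union>i<n. pg i)"]) (use fU in auto)
    show "finite ?P" by (rule finite_subset[of _ "Pow (pg n)"]) (use fin in auto)
  qed (use fU fin dU in auto)
  then show ?case using Suc.IH w by (simp add: mult.commute)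
qed

lemma gf_finite_union4:
  assumes "finite A" "finite B" "finite C" "finite D"
    "A \<inter> B = {}" "A \<inter> C = {}" "A \<inter> D = {}" "B \<inter> C = {}" "B \<inter> D = {}" "C \<inter> D = {}"
  shows "gf (A \<union> B \<union> C \<union> D) = gf A + gf B + gf C + gf D"
  using assms by (simp add: gf_union Int_Un_distrib2)

section \<open>Book graph\<close>

lemma book_adj_simps:
  "book_adj BU y \<longleftrightarrow> y = BV \<or> (\<exists>i. y = BA i)"
  "book_adj BV y \<longleftrightarrow> y = BU \<or> (\<exists>i. y = BB i)"
  "book_adj (BA i) y \<longleftrightarrow> y = BU \<or> y = BB i"
  "book_adj (BB i) y \<longleftrightarrow> y = BA i \<or> y = BV"
  by (cases y; auto simp: book_adj_def)+

lemma book_td_iff: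
  "total_dominating (book_verts n) book_adj D \<longleftrightarrow> D \<subseteq> book_verts n \<and>
     (BV \<in> D \<or> (\<exists>i. BA i \<in> D)) \<and> (BU \<in> D \<or> (\<exists>i. BB i \<in> D)) \<and>
     (\<forall>i<n. BU \<in> D \<or> BB i \<in> D) \<and> (\<forall>i<n. BA i \<in> D \<or> BV \<in> D)"
proof -
  have V: "(\<forall>x\<in>book_verts n. Q x) \<longleftrightarrow> Q BU \<and> Q BV \<and> (\<forall>i<n. Q (BA i)) \<and> (\<forall>i<n. Q (BB i))" for Q
    by (auto simp: book_verts_def)
  have 1: "(\<exists>y\<in>D. book_adj BU y) \<longleftrightarrow> BV \<in> D \<or> (\<exists>i. BA i \<in> D)"
    by (auto simp: book_adj_simps)
  have 2: "(\<exists>y\<in>D. book_adj BV y) \<longleftrightarrow> BU \<in> D \<or> (\<exists>i. BB i \<in> D)"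
    by (auto simp: book_adj_simps)
  have 3: "(\<exists>y\<in>D. book_adj (BA i) y) \<longleftrightarrow> BU \<in> D \<or> BB i \<in> D" for i
    by (auto simp: book_adj_simps)
  have 4: "(\<exists>y\<in>D. book_adj (BB i) y) \<longleftrightarrow> BA i \<in> D \<or> BV \<in> D" for i
    by (auto simp: book_adj_simps)
  show ?thesis unfolding total_dominating_def V 1 2 3 4 by blast
qed

definition bpg :: "nat \<Rightarrow> book_vertex set" where "bpg i = {BA i, BB i}"

lemma bpg_Un: "(\<Union>i<n. bpg i) = BA ` {..<n} \<union> BB ` {..<n}"
  by (auto simp: bpg_def)

lemma bpg_disj: "i \<noteq> j \<Longrightarrow> bpg i \<inter> bpg j = {}"
  by (auto simp: bpg_def)

lemma pow2: "{T. T \<subseteq> {x, y} \<and> P T} = {T \<in> {{}, {x}, {y}, {x, y}}. P T}"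
proof -
  have "{T. T \<subseteq> {x, y} \<and> P T} = {T \<in> Pow {x, y}. P T}" by blast
  also have "Pow {x, y} = {{}, {x}, {y}, {x, y}}" by (simp add: Pow_insert) blast
  finally show ?thesis .
qed

lemma gf_bpg_all: "gf {T. T \<subseteq> bpg i \<and> True} = [:1,1:]^2"
proof -
  have "{T. T \<subseteq> bpg i \<and> True} = {{}, {BA i}, {BB i}, {BA i, BB i}}"
    unfolding bpg_def by (subst pow2) auto
  then show ?thesis by (simp add: gf_def monom_altdef power2_eq_square algebra_simps)
qed

lemma gf_bpg_a: "gf {T. T \<subseteq> bpg i \<and> BA i \<in> T} = [:0,1,1:]"
proof -
  have "{T. T \<subseteq> bpg i \<and> BA i \<in> T} = {{BA i}, {BA i, BB i}}"
    unfolding bpg_def by (subst pow2) auto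
  then show ?thesis by (simp add: gf_def monom_altdef power2_eq_square algebra_simps)
qed

lemma gf_bpg_b: "gf {T. T \<subseteq> bpg i \<and> BB i \<in> T} = [:0,1,1:]"
proof -
  have "{T. T \<subseteq> bpg i \<and> BB i \<in> T} = {{BB i}, {BA i, BB i}}"
    unfolding bpg_def by (subst pow2) auto
  then show ?thesis by (simp add: gf_def monom_altdef power2_eq_square algebra_simps)
qed

lemma gf_bpg_ab: "gf {T. T \<subseteq> bpg i \<and> (BA i \<in> T \<and> BB i \<in> T)} = [:0,0,1:]"
proof -
  have "{T. T \<subseteq> bpg i \<and> (BA i \<in> T \<and> BB i \<in> T)} = {{BA i, BB i}}"
    unfolding bpg_def by (subst pow2) auto
  then show ?thesis by (simp add: gf_def monom_altdef power2_eq_square algebra_simps)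
qed

definition bG :: "nat \<Rightarrow> (nat \<Rightarrow> book_vertex set \<Rightarrow> bool) \<Rightarrow> book_vertex set set" where
  "bG n ok = {S. S \<subseteq> (\<Union>i<n. bpg i) \<and> (\<forall>i<n. ok i (S \<inter> bpg i))}"

lemma bG_gf:
  assumes "\<And>i. gf {T. T \<subseteq> bpg i \<and> ok i T} = w"
  shows "gf (bG n ok) = w ^ n"
  unfolding bG_def by (rule gf_pages) (use assms bpg_disj in \<open>auto simp: bpg_def\<close>)

lemma bG_fin: "finite (bG n ok)" "S \<in> bG n ok \<Longrightarrow> S \<subseteq> BA ` {..<n} \<union> BB ` {..<n}"
  "S \<in> bG n ok \<Longrightarrow> finite S"
proof -
  show "finite (bG n ok)"
    by (rule finite_subset[of _ "Pow (\<Union>i<n. bpg i)"]) (auto simp: bG_def bpg_def)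
  show "S \<in> bG n ok \<Longrightarrow> S \<subseteq> BA ` {..<n} \<union> BB ` {..<n}"
    by (auto simp: bG_def bpg_Un[symmetric])
  then show "S \<in> bG n ok \<Longrightarrow> finite S"
    by (meson finite_Un finite_imageI finite_lessThan finite_subset)
qed

definition TDb :: "nat \<Rightarrow> bool \<Rightarrow> bool \<Rightarrow> book_vertex set set" where
  "TDb n p q = {D. total_dominating (book_verts n) book_adj D \<and> (BU \<in> D \<longleftrightarrow> p) \<and> (BV \<in> D \<longleftrightarrow> q)}"

lemma TDb_TT: "TDb n True True = insert BU ` insert BV ` bG n (\<lambda>i T. True)"
proof (intro equalityI subsetI)
  fix D assume D: "D \<in> TDb n True True"
  let ?S = "D - {BU, BV}"
  have "?S \<in> bG n (\<lambda>i T. True)"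
    using D unfolding TDb_def book_td_iff mem_Collect_eq by (auto simp: bG_def bpg_Un book_verts_def)
  moreover have "D = insert BU (insert BV ?S)" using D by (auto simp: TDb_def)
  ultimately show "D \<in> insert BU ` insert BV ` bG n (\<lambda>i T. True)" by blast
next
  fix D assume "D \<in> insert BU ` insert BV ` bG n (\<lambda>i T. True)"
  then obtain S where S: "S \<in> bG n (\<lambda>i T. True)" "D = insert BU (insert BV S)" by auto
  have "S \<subseteq> BA ` {..<n} \<union> BB ` {..<n}" using bG_fin(2)[OF S(1)] .
  then show "D \<in> TDb n True True"
    using S unfolding TDb_def book_td_iff mem_Collect_eq by (auto simp: book_verts_def)
qed

lemma TDb_TF: assumes "n \<ge> 1" shows "TDb n True False = insert BU ` bG n (\<lambda>i T. BA i \<in> T)"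
proof (intro equalityI subsetI)
  fix D assume D: "D \<in> TDb n True False"
  let ?S = "D - {BU}"
  have "?S \<in> bG n (\<lambda>i T. BA i \<in> T)"
    using D unfolding TDb_def book_td_iff mem_Collect_eq by (auto simp: bG_def bpg_Un book_verts_def bpg_def)
  moreover have "D = insert BU ?S" using D by (auto simp: TDb_def)
  ultimately show "D \<in> insert BU ` bG n (\<lambda>i T. BA i \<in> T)" by blast
next
  fix D assume "D \<in> insert BU ` bG n (\<lambda>i T. BA i \<in> T)"
  then obtain S where S: "S \<in> bG n (\<lambda>i T. BA i \<in> T)" "D = insert BU S" by auto
  have sub: "S \<subseteq> BA ` {..<n} \<union> BB ` {..<n}" using bG_fin(2)[OF S(1)] .
  have a: "\<forall>i<n. BA i \<in> S" using S(1) by (auto simp: bG_def bpg_def)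
  then have "BA 0 \<in> S" using assms by auto
  then show "D \<in> TDb n True False"
    using S sub a unfolding TDb_def book_td_iff mem_Collect_eq by (auto simp: book_verts_def)
qed

lemma TDb_FT: assumes "n \<ge> 1" shows "TDb n False True = insert BV ` bG n (\<lambda>i T. BB i \<in> T)"
proof (intro equalityI subsetI)
  fix D assume D: "D \<in> TDb n False True"
  let ?S = "D - {BV}"
  have "?S \<in> bG n (\<lambda>i T. BB i \<in> T)"
    using D unfolding TDb_def book_td_iff mem_Collect_eq by (auto simp: bG_def bpg_Un book_verts_def bpg_def)
  moreover have "D = insert BV ?S" using D by (auto simp: TDb_def)
  ultimately show "D \<in> insert BV ` bG n (\<lambda>i T. BB i \<in> T)" by blast
next
  fix D assume "D \<in> insert BV ` bG n (\<lambda>i T. BB i \<in> T)"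
  then obtain S where S: "S \<in> bG n (\<lambda>i T. BB i \<in> T)" "D = insert BV S" by auto
  have sub: "S \<subseteq> BA ` {..<n} \<union> BB ` {..<n}" using bG_fin(2)[OF S(1)] .
  have a: "\<forall>i<n. BB i \<in> S" using S(1) by (auto simp: bG_def bpg_def)
  then have "BB 0 \<in> S" using assms by auto
  then show "D \<in> TDb n False True"
    using S sub a unfolding TDb_def book_td_iff mem_Collect_eq by (auto simp: book_verts_def)
qed

lemma TDb_FF: assumes "n \<ge> 1" shows "TDb n False False = bG n (\<lambda>i T. BA i \<in> T \<and> BB i \<in> T)"
proof (intro equalityI subsetI)
  fix D assume D: "D \<in> TDb n False False"
  then show "D \<in> bG n (\<lambda>i T. BA i \<in> T \<and> BB i \<in> T)"
    unfolding TDb_def book_td_iff mem_Collect_eq by (auto simp: bG_def bpg_Un book_verts_def bpg_def)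
next
  fix D assume S: "D \<in> bG n (\<lambda>i T. BA i \<in> T \<and> BB i \<in> T)"
  have sub: "D \<subseteq> BA ` {..<n} \<union> BB ` {..<n}" using bG_fin(2)[OF S] .
  have a: "\<forall>i<n. BA i \<in> D \<and> BB i \<in> D" using S by (auto simp: bG_def bpg_def)
  then have "BA 0 \<in> D" "BB 0 \<in> D" using assms by auto
  then show "D \<in> TDb n False False"
    using sub a unfolding TDb_def book_td_iff mem_Collect_eq by (auto simp: book_verts_def)
qed

lemma coeff_bin: "coeff ([:1,1:]^m :: nat poly) k = m choose k"
proof (cases "k \<le> m")
  case True
  then show ?thesis by (simp add: coeff_linear_poly_power)
next
  case False
  have "degree ([:1,1:]^m :: nat poly) \<le> m"
    using degree_power_le[of "[:1,1:]::nat poly" m] by simp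
  then show ?thesis using False by (simp add: coeff_eq_0)
qed

lemma coeff_bin': "coeff ([:Suc 0, Suc 0:]^m :: nat poly) k = m choose k"
  using coeff_bin by simp

lemma x_pow: "([:0,1:] :: nat poly) ^ k = monom 1 k"
  by (metis monom_altdef smult_1_left)

lemma p011: "([:0,1,1:]::nat poly)^n = monom 1 n * [:1,1:]^n"
proof -
  have "[:0,1,1:] = [:0,1:] * ([:1,1:]::nat poly)" by simp
  then have "([:0,1,1:]::nat poly)^n = [:0,1:]^n * [:1,1:]^n" by (metis power_mult_distrib)
  then show ?thesis by (simp only: x_pow)
qed

lemma book_poly:
  assumes "n \<ge> 1"
  shows "total_dom_poly (book_verts n) book_adj =
    monom 1 2 * [:1,1:]^(2*n) + monom 1 (n+1) * [:1,1:]^n + monom 1 (n+1) * [:1,1:]^n + monom 1 (2*n)"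
proof -
  have fV: "finite (book_verts n)" by (simp add: book_verts_def)
  let ?TD = "{D. total_dominating (book_verts n) book_adj D}"
  have split: "?TD = TDb n True True \<union> TDb n True False \<union> TDb n False True \<union> TDb n False False"
    by (auto simp: TDb_def)
  have finT: "finite (TDb n p q)" for p q
    by (rule finite_subset[of _ "Pow (book_verts n)"]) (use fV in \<open>auto simp: TDb_def total_dominating_def\<close>)
  have "gf ?TD = gf (TDb n True True) + gf (TDb n True False) + gf (TDb n False True) + gf (TDb n False False)"
    unfolding split
    apply (rule gf_finite_union4)
    apply (rule finT)+
    apply (auto simp: TDb_def)
    done
  also have "gf (TDb n True True) = monom 1 2 * [:1,1:]^(2*n)"
  proof -
    note F = bG_fin[where n=n and ok="\<lambda>i T. True"]
    have i1: "gf (insert BV ` bG n (\<lambda>i T. True)) = monom 1 1 * gf (bG n (\<lambda>i T. True))"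
      by (rule gf_insert_image) (use F in auto)
    have "gf (TDb n True True) = monom 1 1 * gf (insert BV ` bG n (\<lambda>i T. True))"
      unfolding TDb_TT by (rule gf_insert_image) (use F in auto)
    then have "gf (TDb n True True) = monom 1 1 * (monom 1 1 * gf (bG n (\<lambda>i T. True)))"
      using i1 by simp
    also have "gf (bG n (\<lambda>i T. True)) = ([:1,1:]^2)^n" by (rule bG_gf) (rule gf_bpg_all)
    also have "monom 1 1 * (monom 1 1 * ([:1,1:]^2)^n) = (monom 1 1 * monom 1 1) * ([:1,1:]::nat poly)^(2*n)"
      by (simp only: mult.assoc power_mult)
    also have "(monom 1 1 * monom 1 1) = (monom 1 2 :: nat poly)"
      by (simp add: mult_monom numeral_2_eq_2)
    finally show ?thesis .
  qed
  also have "gf (TDb n True False) = monom 1 (n+1) * [:1,1:]^n"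
  proof -
    have "gf (TDb n True False) = monom 1 1 * gf (bG n (\<lambda>i T. BA i \<in> T))"
      unfolding TDb_TF[OF assms]
      using bG_fin[where n=n and ok="\<lambda>i T. BA i \<in> T"] by (subst gf_insert_image) auto
    also have "gf (bG n (\<lambda>i T. BA i \<in> T)) = [:0,1,1:]^n" by (rule bG_gf) (rule gf_bpg_a)
    also have "... = monom 1 n * [:1,1:]^n" by (rule p011)
    finally show ?thesis by (simp add: mult_monom mult.assoc[symmetric])
  qed
  also have "gf (TDb n False True) = monom 1 (n+1) * [:1,1:]^n"
  proof -
    have "gf (TDb n False True) = monom 1 1 * gf (bG n (\<lambda>i T. BB i \<in> T))"
      unfolding TDb_FT[OF assms]
      using bG_fin[where n=n and ok="\<lambda>i T. BB i \<in> T"] by (subst gf_insert_image) auto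
    also have "gf (bG n (\<lambda>i T. BB i \<in> T)) = [:0,1,1:]^n" by (rule bG_gf) (rule gf_bpg_b)
    also have "... = monom 1 n * [:1,1:]^n" by (rule p011)
    finally show ?thesis by (simp add: mult_monom mult.assoc[symmetric])
  qed
  also have "gf (TDb n False False) = monom 1 (2*n)"
  proof -
    have "gf (TDb n False False) = [:0,0,1:]^n"
      unfolding TDb_FF[OF assms] by (rule bG_gf) (rule gf_bpg_ab)
    also have "([:0,0,1:] :: nat poly)^n = [:0,1:]^(2*n)"
    proof -
      have "[:0,0,1:] = ([:0,1:] :: nat poly)^2" by (simp add: power2_eq_square)
      then show ?thesis by (simp only: power_mult)
    qed
    also have "... = monom 1 (2*n)" by (rule x_pow)
    finally show ?thesis .
  qed
  finally show ?thesis using tdp_gf[OF fV] by simp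
qed

lemma book_coeff:
  assumes "n \<ge> 1"
  shows "coeff (total_dom_poly (book_verts n) book_adj) k =
    (if 2 \<le> k then (2*n) choose (k-2) else 0) + 2 * (if n+1 \<le> k then n choose (k-(n+1)) else 0)
    + (if k = 2*n then 1 else 0)"
  unfolding book_poly[OF assms] by (auto simp: coeff_monom_mult coeff_bin coeff_bin' coeff_monom not_less)

section \<open>Friendship graph\<close>

lemma fr_adj_simps:
  "fr_adj FC y \<longleftrightarrow> (\<exists>i. y = FX i) \<or> (\<exists>i. y = FZ i)"
  "fr_adj (FX i) y \<longleftrightarrow> y = FC \<or> y = FY i"
  "fr_adj (FY i) y \<longleftrightarrow> y = FX i \<or> y = FZ i"
  "fr_adj (FZ i) y \<longleftrightarrow> y = FY i \<or> y = FC"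
  by (cases y; auto simp: fr_adj_def)+

lemma fr_td_iff:
  "total_dominating (fr_verts n) fr_adj D \<longleftrightarrow> D \<subseteq> fr_verts n \<and>
     ((\<exists>i. FX i \<in> D) \<or> (\<exists>i. FZ i \<in> D)) \<and> (\<forall>i<n. FC \<in> D \<or> FY i \<in> D) \<and>
     (\<forall>i<n. FX i \<in> D \<or> FZ i \<in> D)"
proof -
  have V: "(\<forall>x\<in>fr_verts n. Q x) \<longleftrightarrow> Q FC \<and> (\<forall>i<n. Q (FX i)) \<and> (\<forall>i<n. Q (FY i)) \<and> (\<forall>i<n. Q (FZ i))" for Q
    by (auto simp: fr_verts_def)
  have 1: "(\<exists>y\<in>D. fr_adj FC y) \<longleftrightarrow> (\<exists>i. FX i \<in> D) \<or> (\<exists>i. FZ i \<in> D)"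
    by (auto simp: fr_adj_simps)
  have 2: "(\<exists>y\<in>D. fr_adj (FX i) y) \<longleftrightarrow> FC \<in> D \<or> FY i \<in> D" for i
    by (auto simp: fr_adj_simps)
  have 3: "(\<exists>y\<in>D. fr_adj (FY i) y) \<longleftrightarrow> FX i \<in> D \<or> FZ i \<in> D" for i
    by (auto simp: fr_adj_simps)
  have 4: "(\<exists>y\<in>D. fr_adj (FZ i) y) \<longleftrightarrow> FC \<in> D \<or> FY i \<in> D" for i
    by (auto simp: fr_adj_simps)
  show ?thesis unfolding total_dominating_def V 1 2 3 4 by blast
qed

definition fpg :: "nat \<Rightarrow> fr_vertex set" where "fpg i = {FX i, FY i, FZ i}"

lemma fpg_Un: "(\<Union>i<n. fpg i) = FX ` {..<n} \<union> FY ` {..<n} \<union> FZ ` {..<n}"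
  by (auto simp: fpg_def)

lemma fpg_disj: "i \<noteq> j \<Longrightarrow> fpg i \<inter> fpg j = {}"
  by (auto simp: fpg_def)

lemma pow3: "{T. T \<subseteq> {x, y, z} \<and> P T} = {T \<in> {{}, {x}, {y}, {z}, {x, y}, {x, z}, {y, z}, {x, y, z}}. P T}"
proof -
  have "{T. T \<subseteq> {x, y, z} \<and> P T} = {T \<in> Pow {x, y, z}. P T}" by blast
  also have "Pow {x, y, z} = {{}, {x}, {y}, {z}, {x, y}, {x, z}, {y, z}, {x, y, z}}" by (simp add: Pow_insert insert_commute)
  finally show ?thesis .
qed

lemma two_three: "c \<noteq> d \<Longrightarrow> c \<noteq> e \<Longrightarrow> d \<noteq> e \<Longrightarrow> {a, b} = {c, d, e} \<longleftrightarrow> False"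
proof
  assume "c \<noteq> d" "c \<noteq> e" "d \<noteq> e" "{a, b} = {c, d, e}"
  then have "card {a, b} = 3" by simp
  moreover have "card {a, b} \<le> 2" by (simp add: card_insert_le_m1)
  ultimately show False by simp
qed simp

lemma gf_fpg_c: "gf {T. T \<subseteq> fpg i \<and> (FX i \<in> T \<or> FZ i \<in> T)} = [:0,2,3,1:]"
proof -
  have "{T. T \<subseteq> fpg i \<and> (FX i \<in> T \<or> FZ i \<in> T)} =
     {{FX i}, {FZ i}, {FX i, FY i}, {FX i, FZ i}, {FY i, FZ i}, {FX i, FY i, FZ i}}"
    unfolding fpg_def by (subst pow3) auto
  then show ?thesis by (simp add: gf_def monom_altdef power2_eq_square power3_eq_cube algebra_simps doubleton_eq_iff two_three)
qed

lemma gf_fpg_0: "gf {T. T \<subseteq> fpg i \<and> (FY i \<in> T \<and> (FX i \<in> T \<or> FZ i \<in> T))} = [:0,0,2,1:]"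
proof -
  have "{T. T \<subseteq> fpg i \<and> (FY i \<in> T \<and> (FX i \<in> T \<or> FZ i \<in> T))} =
     {{FX i, FY i}, {FY i, FZ i}, {FX i, FY i, FZ i}}"
    unfolding fpg_def by (subst pow3) auto
  then show ?thesis by (simp add: gf_def monom_altdef power2_eq_square power3_eq_cube algebra_simps doubleton_eq_iff two_three)
qed

definition fG :: "nat \<Rightarrow> (nat \<Rightarrow> fr_vertex set \<Rightarrow> bool) \<Rightarrow> fr_vertex set set" where
  "fG n ok = {S. S \<subseteq> (\<Union>i<n. fpg i) \<and> (\<forall>i<n. ok i (S \<inter> fpg i))}"

lemma fG_gf:
  assumes "\<And>i. gf {T. T \<subseteq> fpg i \<and> ok i T} = w"
  shows "gf (fG n ok) = w ^ n"
  unfolding fG_def by (rule gf_pages) (use assms fpg_disj in \<open>auto simp: fpg_def\<close>)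

lemma fG_fin: "finite (fG n ok)" "S \<in> fG n ok \<Longrightarrow> S \<subseteq> FX ` {..<n} \<union> FY ` {..<n} \<union> FZ ` {..<n}"
  "S \<in> fG n ok \<Longrightarrow> finite S"
proof -
  show "finite (fG n ok)"
    by (rule finite_subset[of _ "Pow (\<Union>i<n. fpg i)"]) (auto simp: fG_def fpg_def)
  show "S \<in> fG n ok \<Longrightarrow> S \<subseteq> FX ` {..<n} \<union> FY ` {..<n} \<union> FZ ` {..<n}"
    by (auto simp: fG_def fpg_Un[symmetric])
  then show "S \<in> fG n ok \<Longrightarrow> finite S"
    by (meson finite_Un finite_imageI finite_lessThan finite_subset)
qed

definition TDf :: "nat \<Rightarrow> bool \<Rightarrow> fr_vertex set set" where
  "TDf n p = {D. total_dominating (fr_verts n) fr_adj D \<and> (FC \<in> D \<longleftrightarrow> p)}"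

lemma TDf_T: assumes "n \<ge> 1" shows "TDf n True = insert FC ` fG n (\<lambda>i T. FX i \<in> T \<or> FZ i \<in> T)"
proof (intro equalityI subsetI)
  fix D assume D: "D \<in> TDf n True"
  let ?S = "D - {FC}"
  have "?S \<in> fG n (\<lambda>i T. FX i \<in> T \<or> FZ i \<in> T)"
    using D unfolding TDf_def fr_td_iff mem_Collect_eq by (auto simp: fG_def fpg_Un fr_verts_def fpg_def)
  moreover have "D = insert FC ?S" using D by (auto simp: TDf_def)
  ultimately show "D \<in> insert FC ` fG n (\<lambda>i T. FX i \<in> T \<or> FZ i \<in> T)" by blast
next
  fix D assume "D \<in> insert FC ` fG n (\<lambda>i T. FX i \<in> T \<or> FZ i \<in> T)"
  then obtain S where S: "S \<in> fG n (\<lambda>i T. FX i \<in> T \<or> FZ i \<in> T)" "D = insert FC S" by auto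
  have sub: "S \<subseteq> FX ` {..<n} \<union> FY ` {..<n} \<union> FZ ` {..<n}" using fG_fin(2)[OF S(1)] .
  have a: "\<forall>i<n. FX i \<in> S \<or> FZ i \<in> S" using S(1) by (auto simp: fG_def fpg_def)
  then have "FX 0 \<in> S \<or> FZ 0 \<in> S" using assms by auto
  then show "D \<in> TDf n True"
    using S sub a unfolding TDf_def fr_td_iff mem_Collect_eq by (auto simp: fr_verts_def)
qed

lemma TDf_F: assumes "n \<ge> 1" shows "TDf n False = fG n (\<lambda>i T. FY i \<in> T \<and> (FX i \<in> T \<or> FZ i \<in> T))"
proof (intro equalityI subsetI)
  fix D assume D: "D \<in> TDf n False"
  then show "D \<in> fG n (\<lambda>i T. FY i \<in> T \<and> (FX i \<in> T \<or> FZ i \<in> T))"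
    unfolding TDf_def fr_td_iff mem_Collect_eq by (auto simp: fG_def fpg_Un fr_verts_def fpg_def)
next
  fix D assume S: "D \<in> fG n (\<lambda>i T. FY i \<in> T \<and> (FX i \<in> T \<or> FZ i \<in> T))"
  have sub: "D \<subseteq> FX ` {..<n} \<union> FY ` {..<n} \<union> FZ ` {..<n}" using fG_fin(2)[OF S] .
  have a: "\<forall>i<n. FY i \<in> D \<and> (FX i \<in> D \<or> FZ i \<in> D)" using S by (auto simp: fG_def fpg_def)
  then have "FX 0 \<in> D \<or> FZ 0 \<in> D" using assms by auto
  then show "D \<in> TDf n False"
    using sub a unfolding TDf_def fr_td_iff mem_Collect_eq by (auto simp: fr_verts_def)
qed

lemma fr_poly0:
  assumes "n \<ge> 1"
  shows "total_dom_poly (fr_verts n) fr_adj = monom 1 1 * [:0,2,3,1:]^n + [:0,0,2,1:]^n"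
proof -
  have fV: "finite (fr_verts n)" by (simp add: fr_verts_def)
  let ?TD = "{D. total_dominating (fr_verts n) fr_adj D}"
  have split: "?TD = TDf n True \<union> TDf n False" by (auto simp: TDf_def)
  have finT: "finite (TDf n p)" for p
    by (rule finite_subset[of _ "Pow (fr_verts n)"]) (use fV in \<open>auto simp: TDf_def total_dominating_def\<close>)
  have "gf ?TD = gf (TDf n True) + gf (TDf n False)"
    unfolding split
    apply (rule gf_union)
    apply (rule finT)+
    apply (auto simp: TDf_def)
    done
  also have "gf (TDf n True) = monom 1 1 * [:0,2,3,1:]^n"
  proof -
    note F = fG_fin[where n=n and ok="\<lambda>i T. FX i \<in> T \<or> FZ i \<in> T"]
    have "gf (TDf n True) = monom 1 1 * gf (fG n (\<lambda>i T. FX i \<in> T \<or> FZ i \<in> T))"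
      unfolding TDf_T[OF assms] by (rule gf_insert_image) (use F in auto)
    also have "gf (fG n (\<lambda>i T. FX i \<in> T \<or> FZ i \<in> T)) = [:0,2,3,1:]^n"
      by (rule fG_gf) (rule gf_fpg_c)
    finally show ?thesis .
  qed
  also have "gf (TDf n False) = [:0,0,2,1:]^n"
    unfolding TDf_F[OF assms] by (rule fG_gf) (rule gf_fpg_0)
  finally show ?thesis using tdp_gf[OF fV] by simp
qed

lemma fr_poly:
  assumes "n \<ge> 1"
  shows "total_dom_poly (fr_verts n) fr_adj = monom 1 (n+1) * ([:2,1:]^n * ([:1,1:]^n + monom 1 (n-1)))"
proof -
  have e1: "([:0,2,3,1:]::nat poly)^n = monom 1 n * ([:2,1:]^n * [:1,1:]^n)"
  proof -
    have "([:0,2,3,1:]::nat poly) = [:0,1:] * ([:2,1:] * [:1,1:])" by simp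
    then have "([:0,2,3,1:]::nat poly)^n = [:0,1:]^n * ([:2,1:]^n * [:1,1:]^n)"
      by (metis power_mult_distrib)
    then show ?thesis by (simp only: x_pow)
  qed
  have e2: "([:0,0,2,1:]::nat poly)^n = monom 1 (2*n) * [:2,1:]^n"
  proof -
    have "([:0,0,2,1:]::nat poly) = [:0,1:]^2 * [:2,1:]" by (simp add: power2_eq_square)
    then have "([:0,0,2,1:]::nat poly)^n = ([:0,1:]^2)^n * [:2,1:]^n"
      by (metis power_mult_distrib)
    also have "([:0,1:]^2)^n = ([:0,1:] :: nat poly)^(2*n)" by (simp only: power_mult)
    finally show ?thesis by (simp only: x_pow)
  qed
  have e3: "monom (1::nat) (2*n) = monom 1 (n+1) * monom 1 (n-1)"
    using assms by (simp add: mult_monom mult_2)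
  have e4: "monom (1::nat) 1 * monom 1 n = monom 1 (n+1)"
    by (simp add: mult_monom)
  have e5: "monom (1::nat) 1 * (monom 1 n * X) = monom 1 (n+1) * X" for X
    by (simp only: mult.assoc[symmetric] e4)
  show ?thesis unfolding fr_poly0[OF assms] e1 e2 e3 e5
    by (simp only: distrib_left mult.assoc mult.commute[of "[:2,1:]^n"])

qed



lemma unimodal_steps:
  assumes up: "\<And>i. i < m \<Longrightarrow> coeff p i \<le> coeff p (Suc i)"
    and down: "\<And>i. m \<le> i \<Longrightarrow> coeff p (Suc i) \<le> coeff p i"
  shows "unimodal p"
  unfolding unimodal_def
proof (intro exI[of _ m] conjI allI impI)
  fix i j assume ij: "i \<le> j \<and> j \<le> m"
  let ?f = "\<lambda>i. coeff p (min i m)"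
  have "?f i \<le> ?f j"
  proof (rule lift_Suc_mono_le[of ?f])
    fix k show "?f k \<le> ?f (Suc k)"
      using up[of k] by (cases "k < m") (auto simp: min_def)
  qed (use ij in auto)
  then show "coeff p i \<le> coeff p j" using ij by (simp add: min_def)
next
  fix i j assume ij: "m \<le> i \<and> i \<le> j \<and> j \<le> degree p"
  let ?f = "\<lambda>i. coeff p (max i m)"
  have "?f j \<le> ?f i"
  proof (rule lift_Suc_antimono_le[of ?f])
    fix k show "?f (Suc k) \<le> ?f k"
      using down[of k] by (cases "m \<le> k") (auto simp: max_def)
  qed (use ij in auto)
  then show "coeff p j \<le> coeff p i" using ij by (auto simp: max_def split: if_splits)
qed

lemma bin_step: "Suc a * (N choose Suc a) = (N - a) * (N choose a)"
  using times_binomial_minus1_eq[of "Suc a" N] binomial_absorb_comp[of N a] by simp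

lemma two_choose2: "2 * (n choose 2) = n * (n - 1)"
  using times_binomial_minus1_eq[of 2 n] by simp

lemma vander_le: "i \<le> r \<Longrightarrow> (m choose i) * (n choose (r - i)) \<le> (m + n) choose r"
  using member_le_sum[of i "{..r}" "\<lambda>k. (m choose k) * (n choose (r - k))"] vandermonde[of m n r]
  by simp

lemma bin_lt_imp:
  assumes lt: "(n choose j) < (n choose (j+1))"
  shows "2*j+1 < n"
proof (rule ccontr)
  assume "\<not> 2*j+1 < n"
  then have "j \<ge> n div 2" by linarith
  then have "n choose (j+1) \<le> n choose j"
    by (cases "j+1 \<le> n") (auto intro: binomial_antimono simp: binomial_eq_0)
  with lt show False by simp
qed

lemma book_down_key:
  fixes n j :: nat
  assumes j1: "1 \<le> j" and lt: "(n choose j) < (n choose (j+1))"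
  shows "((2*n) choose (n+j)) + 2 * (n choose (j+1)) \<le> ((2*n) choose (n+j-1))"
proof -
  have jn: "2*j+1 < n"
  proof (rule ccontr)
    assume "\<not> 2*j+1 < n"
    then have "j \<ge> n div 2" by linarith
    then have "n choose (j+1) \<le> n choose j"
      by (cases "j+1 \<le> n") (auto intro: binomial_antimono simp: binomial_eq_0)
    with lt show False by simp
  qed
  show ?thesis
  proof (cases "n \<ge> 6")
    case True
    let ?C = "(2*n) choose (n+j-1)"
    have st: "(n+j) * ((2*n) choose (n+j)) = (n-j+1) * ?C"
      using bin_step[of "n+j-1" "2*n"] j1 jn by (simp add: Suc_diff_le)
    have v: "(n choose (j+1)) * (n choose 2) \<le> ?C"
    proof -
      have "(n choose (j+1)) * (n choose (n+j-1 - (j+1))) \<le> (n+n) choose (n+j-1)"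
        by (rule vander_le) (use jn in simp)
      moreover have "n+j-1 - (j+1) = n - 2" using jn by simp
      moreover have "n choose (n-2) = n choose 2"
      proof -
        have "2 \<le> n" using jn by simp
        from binomial_symmetric[OF this] show ?thesis by simp
      qed
      ultimately show ?thesis by (simp add: mult_2)
    qed
    have c2: "2*n+2 \<le> n choose 2"
    proof -
      have "2 * (n choose 2) = n * (n - 1)" by (rule two_choose2)
      moreover have "n * (n-1) \<ge> 4*n+4"
      proof -
        have h: "n * (n-1) \<ge> n * 5" using True by (intro mult_le_mono2) simp
        show ?thesis using h True by linarith
      qed
      ultimately show ?thesis by simp
    qed
    have key: "2*(n+j) \<le> (2*j-1) * (n choose 2)"
    proof -
      have "(2*j-1) * (2*n+2) \<le> (2*j-1) * (n choose 2)" using c2 by (rule mult_le_mono2)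
      moreover have "2*(n+j) \<le> (2*j-1) * (2*n+2)"
      proof -
        obtain t where t: "j = Suc t" using j1 by (cases j) auto
        show ?thesis unfolding t by (simp add: algebra_simps)
      qed
      ultimately show ?thesis by linarith
    qed
    have "(n+j) * (((2*n) choose (n+j)) + 2 * (n choose (j+1))) =
          (n-j+1) * ?C + 2*(n+j) * (n choose (j+1))"
      using st by (simp add: algebra_simps)
    also have "\<dots> \<le> (n-j+1) * ?C + (2*j-1) * (n choose 2) * (n choose (j+1))"
      using key by (intro add_left_mono mult_right_mono) auto
    also have "\<dots> \<le> (n-j+1) * ?C + (2*j-1) * ?C"
      using v by (intro add_left_mono) (simp add: mult.assoc mult.commute[of "n choose 2"] mult_le_mono2)
    also have "\<dots> = (n+j) * ?C"
    proof -
      have "(n-j+1) + (2*j-1) = n+j" using jn j1 by simp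
      then show ?thesis by (metis add_mult_distrib)
    qed
    finally show ?thesis using jn by simp
  next
    case False
    then have "n = 4 \<and> j = 1 \<or> n = 5 \<and> j = 1" using jn j1 by auto
    then show ?thesis by (auto simp: numeral_eq_Suc)
  qed
qed

lemma book_unimodal:
  assumes n1: "n \<ge> 1"
  shows "unimodal (total_dom_poly (book_verts n) book_adj)"
proof -
  define A where "A k = (if 2 \<le> k then ((2*n) choose (k-2)) else 0)" for k
  define B where "B k = (if n+1 \<le> k then (n choose (k-(n+1))) else 0)" for k
  define S where "S k = (if k = 2*n then (1::nat) else 0)" for k
  have d: "coeff (total_dom_poly (book_verts n) book_adj) k = A k + 2 * B k + S k" for k
    unfolding book_coeff[OF n1] A_def B_def S_def by simp
  show ?thesis
  proof (rule unimodal_steps[where m="n+2"], unfold d)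
    fix k assume k: "k < n+2"
    have a: "A k \<le> A (Suc k)"
    proof (cases "2 \<le> k")
      case True
      have "((2*n) choose (k-2)) \<le> ((2*n) choose (Suc k - 2))"
        by (rule binomial_mono) (use k True in auto)
      then show ?thesis using True by (simp add: A_def)
    qed (simp add: A_def)
    have b: "B k \<le> B (Suc k)"
    proof (cases "n+1 \<le> k")
      case True
      then have "k = n+1" using k by simp
      then show ?thesis using n1 by (simp add: B_def)
    qed (simp add: B_def)
    show "A k + 2 * B k + S k \<le> A (Suc k) + 2 * B (Suc k) + S (Suc k)"
    proof (cases "k = 2*n")
      case True
      then have "n = 1" "k = 2" using k n1 by auto
      then show ?thesis by (simp add: A_def B_def S_def)
    next
      case False
      then have "S k \<le> S (Suc k)" by (simp add: S_def)
      then show ?thesis using a b by simp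
    qed
  next
    fix k assume k: "n+2 \<le> k"
    obtain j where kj: "k = n+1+j" and j1: "1 \<le> j" using k by (metis add.commute add_Suc_right le_Suc_ex le_add1 one_add_one plus_1_eq_Suc add.assoc le_add2 nat_add_left_cancel_le)
    have Ak: "A k = ((2*n) choose (n+j-1))" using kj j1 by (simp add: A_def)
    have Ak1: "A (Suc k) = ((2*n) choose (n+j))" using kj j1 by (simp add: A_def)
    have Bk: "B k = (n choose j)" using kj by (simp add: B_def)
    have Bk1: "B (Suc k) = (n choose (j+1))" using kj by (simp add: B_def)
    show "A (Suc k) + 2 * B (Suc k) + S (Suc k) \<le> A k + 2 * B k + S k"
    proof (cases "(n choose (j+1)) \<le> (n choose j)")
      case True
      show ?thesis
      proof (cases "Suc k = 2*n")
        case True2: True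
        have n3: "n \<ge> 3" using True2 k by simp
        have "j = n - 2" using True2 kj by simp
        then have nj: "n + j = 2*n - 2" "n + j - 1 = 2*n - 3" using n3 by simp_all
        have s2: "((2*n) choose 2) = ((2*n) choose (2*n-2))" by (rule binomial_symmetric) (use n3 in simp)
        have s3: "((2*n) choose 3) = ((2*n) choose (2*n-3))" by (rule binomial_symmetric) (use n3 in simp)
        have e1: "A (Suc k) = ((2*n) choose 2)" "A k = ((2*n) choose 3)"
          using Ak Ak1 nj s2 s3 by simp_all
        have st: "3 * ((2*n) choose 3) = (2*n-2) * ((2*n) choose 2)"
          using bin_step[of 2 "2*n"] by (simp add: numeral_3_eq_3)
        have "2 * ((2*n) choose 2) = 2*n*(2*n-1)" by (simp add: two_choose2)
        moreover have "2*n*(2*n-1) \<ge> 6*5" using n3 by (intro mult_le_mono) simp_all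
        ultimately have c2: "((2*n) choose 2) \<ge> 15" by linarith
        have "(2*n-2) * ((2*n) choose 2) \<ge> 4 * ((2*n) choose 2)" using n3 by (intro mult_le_mono1) simp
        then have "A k \<ge> A (Suc k) + 1" using st c2 e1 by linarith
        moreover have "B (Suc k) \<le> B k" using True by (simp add: Bk Bk1)
        moreover have "S (Suc k) = 1" "S k = 0" using True2 by (simp_all add: S_def)
        ultimately show ?thesis by linarith
      next
        case False
        have "A (Suc k) \<le> A k"
        proof (cases "n+j \<le> 2*n")
          case True
          show ?thesis unfolding Ak Ak1 by (rule binomial_antimono) (use True j1 in auto)
        qed (simp add: Ak1 binomial_eq_0)
        moreover have "S (Suc k) = 0" using False by (simp add: S_def)
        ultimately show ?thesis using True by (simp add: Bk Bk1)
      qed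
    next
      case False
      then have lt: "(n choose j) < (n choose (j+1))" by simp
      have "2*j+1 < n" by (rule bin_lt_imp[OF lt])
      then have "S (Suc k) = 0" using kj j1 by (simp add: S_def)
      with book_down_key[OF j1 lt] show ?thesis
        by (simp add: Ak Ak1 Bk Bk1)
    qed
  qed
qed



definition lcg :: "(nat \<Rightarrow> nat) \<Rightarrow> bool" where
  "lcg a \<longleftrightarrow> (\<forall>i j. i \<le> j \<longrightarrow> a i * a (Suc j) \<le> a (Suc i) * a j)"

lemma lcg_local:
  assumes loc: "\<And>i. a i * a (Suc (Suc i)) \<le> a (Suc i) * a (Suc i)"
    and nz: "\<And>k. a k = 0 \<Longrightarrow> a (Suc k) = 0"
  shows "lcg a"
  unfolding lcg_def
proof (intro allI impI)
  fix i j :: nat assume "i \<le> j"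
  then show "a i * a (Suc j) \<le> a (Suc i) * a j"
  proof (induction j rule: dec_induct)
    case base then show ?case by (simp add: mult.commute)
  next
    case (step j)
    show ?case
    proof (cases "a (Suc j) = 0")
      case True then show ?thesis using nz[of "Suc j"] by simp
    next
      case False
      have "a (Suc j) * (a i * a (Suc (Suc j))) = (a i * a (Suc j)) * a (Suc (Suc j))"
        by (simp add: mult_ac)
      also have "\<dots> \<le> (a (Suc i) * a j) * a (Suc (Suc j))"
        using step.IH by (rule mult_right_mono) simp
      also have "\<dots> = a (Suc i) * (a j * a (Suc (Suc j)))" by (simp add: mult_ac)
      also have "\<dots> \<le> a (Suc i) * (a (Suc j) * a (Suc j))"
        using loc[of j] by (rule mult_left_mono) simp
      also have "\<dots> = a (Suc j) * (a (Suc i) * a (Suc j))" by (simp add: mult_ac)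
      finally show ?thesis using False by simp
    qed
  qed
qed

lemma lcg_lin:
  assumes "lcg a"
  shows "lcg (\<lambda>k. c * a k + (case k of 0 \<Rightarrow> 0 | Suc k' \<Rightarrow> a k'))"
  unfolding lcg_def
proof (intro allI impI)
  fix i j :: nat assume ij: "i \<le> j"
  let ?p = "\<lambda>k. (case k of 0 \<Rightarrow> 0 | Suc k' \<Rightarrow> a k')"
  have L: "\<And>i j. i \<le> j \<Longrightarrow> a i * a (Suc j) \<le> a (Suc i) * a j" using assms by (simp add: lcg_def)
  have t1: "a i * a (Suc j) \<le> a (Suc i) * a j" using L ij by simp
  have t2: "?p i * a (Suc j) \<le> a (Suc i) * ?p j"
  proof (cases i)
    case (Suc i')
    then obtain j' where j': "j = Suc j'" "i' \<le> j'" using ij by (cases j) auto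
    have "a i' * a (Suc (Suc j')) \<le> a (Suc (Suc i')) * a j'"
    proof (cases "i' = j'")
      case True then show ?thesis by (simp add: mult.commute)
    next
      case False
      have "a i' * a (Suc (Suc j')) \<le> a (Suc i') * a (Suc j')" using L[of i' "Suc j'"] j' by simp
      also have "\<dots> \<le> a (Suc (Suc i')) * a j'" using L[of "Suc i'" j'] j' False by simp
      finally show ?thesis .
    qed
    then show ?thesis using Suc j' by simp
  qed simp
  have t3: "?p i * a j \<le> a i * ?p j"
  proof (cases i)
    case (Suc i')
    then obtain j' where j': "j = Suc j'" "i' \<le> j'" using ij by (cases j) auto
    then show ?thesis using Suc L[of i' j'] by simp
  qed simp
  have "(c * a i + ?p i) * (c * a (Suc j) + ?p (Suc j)) =
        c*c * (a i * a (Suc j)) + c * (a i * a j) + c * (?p i * a (Suc j)) + ?p i * a j"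
    by (simp add: algebra_simps)
  also have "\<dots> \<le> c*c * (a (Suc i) * a j) + c * (a i * a j) + c * (a (Suc i) * ?p j) + a i * ?p j"
    using t1 t2 t3 by (intro add_mono mult_left_mono) auto
  also have "\<dots> = (c * a (Suc i) + ?p (Suc i)) * (c * a j + ?p j)"
    by (simp add: algebra_simps)
  finally show "(c * a i + ?p i) * (c * a (Suc j) + ?p (Suc j)) \<le> (c * a (Suc i) + ?p (Suc i)) * (c * a j + ?p j)" .
qed

lemma lcg_unimodal:
  assumes "lcg a" and pos: "0 < a 0" and ev: "\<And>k. N \<le> k \<Longrightarrow> a k = 0"
  shows "\<exists>m. (\<forall>i<m. a i \<le> a (Suc i)) \<and> (\<forall>i\<ge>m. a (Suc i) \<le> a i)"
proof -
  have ex: "\<exists>k. a (Suc k) \<le> a k" using ev[of N] ev[of "Suc N"] by (intro exI[of _ N]) simp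
  define m where "m = (LEAST k. a (Suc k) \<le> a k)"
  have up: "a i \<le> a (Suc i)" if "i < m" for i
    using not_less_Least[of i "\<lambda>k. a (Suc k) \<le> a k"] that unfolding m_def by simp
  have am: "0 < a m"
  proof (cases m)
    case 0 then show ?thesis using pos by simp
  next
    case (Suc m')
    have "\<not> a (Suc m') \<le> a m'" using not_less_Least[of m' "\<lambda>k. a (Suc k) \<le> a k"] Suc unfolding m_def by simp
    then show ?thesis using Suc by simp
  qed
  have mm: "a (Suc m) \<le> a m" unfolding m_def by (rule LeastI_ex[OF ex])
  have down: "a (Suc i) \<le> a i" if "m \<le> i" for i
  proof -
    have "a m * a (Suc i) \<le> a (Suc m) * a i" using assms(1) that by (simp add: lcg_def)
    also have "\<dots> \<le> a m * a i" using mm by (rule mult_right_mono) simp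
    finally show ?thesis using am by simp
  qed
  show ?thesis using up down by blast
qed

lemma coeff_lin_mult: "coeff ([:c,1:] * (p :: nat poly)) k = c * coeff p k + (case k of 0 \<Rightarrow> 0 | Suc k' \<Rightarrow> coeff p k')"
  by (cases k) (simp_all add: coeff_pCons)

lemma binom_lc: "(n choose k) * (n choose (k+2)) \<le> (n choose (k+1)) * (n choose (k+1))"
proof (cases "k < n")
  case True
  let ?X = "(n choose k) * (n choose (k+2))" and ?Y = "(n choose Suc k) * (n choose Suc k)"
  have s1: "Suc k * (n choose Suc k) = (n - k) * (n choose k)" by (rule bin_step)
  have s2: "Suc (Suc k) * (n choose Suc (Suc k)) = (n - Suc k) * (n choose Suc k)" by (rule bin_step)
  have "?X * ((n - k) * (k+2)) = ((n - k) * (n choose k)) * ((k+2) * (n choose (k+2)))"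
    by (simp only: mult.assoc mult.commute mult.left_commute)
  also have "\<dots> = (Suc k * (n choose Suc k)) * ((n - Suc k) * (n choose Suc k))"
    using s1 s2 by simp
  also have "\<dots> = ?Y * (Suc k * (n - Suc k))" by (simp only: mult.assoc mult.commute mult.left_commute)
  also have "\<dots> \<le> ?Y * ((n - k) * (k+2))"
  proof -
    have "Suc k * (n - Suc k) \<le> (k+2) * (n - k)" by (intro mult_mono) auto
    then have "Suc k * (n - Suc k) \<le> (n - k) * (k+2)" by (simp add: mult.commute)
    then show ?thesis by (rule mult_left_mono) simp
  qed
  finally show ?thesis using True by simp
qed (simp add: binomial_eq_0)

lemma w_loc:
  fixes n k :: nat
  assumes n1: "n \<ge> 1"
  defines "wc \<equiv> \<lambda>k. (n choose k) + (if k = n - 1 then 1 else 0)"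
  shows "wc k * wc (Suc (Suc k)) \<le> wc (Suc k) * wc (Suc k)"
proof (cases "k + 2 \<le> n")
  case False
  then have "wc (Suc (Suc k)) = 0" by (simp add: wc_def binomial_eq_0)
  then show ?thesis by simp
next
  case True
  show ?thesis
  proof (cases "k + 2 = n")
    case True2: True
    have "wc k = (n choose k)" "wc (Suc k) = n + 1" "wc (Suc (Suc k)) = 1"
      using True2 by (auto simp: wc_def)
    moreover have "(n choose k) \<le> (n+1)*(n+1)"
    proof -
      have nk: "n - k = 2" using True2 by simp
      have "n choose k = n choose (n - k)" by (rule binomial_symmetric) (use True2 in simp)
      then have "n choose k = n choose 2" using nk by simp
      moreover have "2 * (n choose 2) = n * (n-1)" by (rule two_choose2)
      moreover have "n * (n-1) \<le> (n+1)*(n+1)" by (intro mult_mono) auto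
      ultimately show ?thesis by linarith
    qed
    ultimately show ?thesis by simp
  next
    case False2: False
    show ?thesis
    proof (cases "k + 3 = n")
      case True3: True
      let ?Y = "n choose Suc k"
      have h: "Suc (Suc k) \<le> n" using True3 by simp
      have "n choose Suc (Suc k) = n choose (n - Suc (Suc k))" by (rule binomial_symmetric[OF h])
      moreover have "n - Suc (Suc k) = 1" using True3 by simp
      ultimately have cn: "n choose Suc (Suc k) = n" by simp
      have e: "wc k = (n choose k)" "wc (Suc k) = ?Y" "wc (Suc (Suc k)) = n + 1"
        using True3 cn by (auto simp: wc_def)
      have s1: "Suc k * ?Y = 3 * (n choose k)" using bin_step[of k n] True3 by simp
      have s2: "Suc (Suc k) * (n choose Suc (Suc k)) = 2 * ?Y" using bin_step[of "Suc k" n] True3 by simp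
      from cn have s3: "Suc (Suc k) * n = 2 * ?Y" using s2 by simp
      have ar: "2 * (Suc k * (n+1)) \<le> 3 * (Suc (Suc k) * n)"
        using True3 by (simp add: algebra_simps)
      have "3 * ((n choose k) * (n+1)) = (3 * (n choose k)) * (n+1)" by (simp only: mult.assoc)
      also have "\<dots> = (Suc k * ?Y) * (n+1)" using s1 by simp
      also have "\<dots> = ?Y * (Suc k * (n+1))" by (simp only: mult.assoc mult.commute mult.left_commute)
      also have "\<dots> \<le> ?Y * (3 * ?Y)"
      proof (rule mult_left_mono)
        show "Suc k * (n+1) \<le> 3 * ?Y" using ar s3 by linarith
      qed simp
      finally show ?thesis using e by simp
    next
      case False3: False
      have "wc k = (n choose k)" "wc (Suc k) = (n choose (k+1))" "wc (Suc (Suc k)) = (n choose (k+2))"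
        using True False2 False3 by (auto simp: wc_def)
      then show ?thesis using binom_lc[of n k] by simp
    qed
  qed
qed

lemma fr_G:
  fixes n :: nat
  assumes n1: "n \<ge> 1"
  shows "lcg (coeff ([:2,1:]^m * ([:1,1:]^n + monom 1 (n-1)) :: nat poly)) \<and>
         0 < coeff ([:2,1:]^m * ([:1,1:]^n + monom 1 (n-1)) :: nat poly) 0"
proof (induction m)
  case 0
  define wc where "wc = (\<lambda>k. (n choose k) + (if k = n - 1 then 1 else (0::nat)))"
  have cw: "coeff ([:1,1:]^n + monom 1 (n-1)) = wc"
    by (rule ext) (simp add: wc_def coeff_bin coeff_bin' coeff_monom)
  have "lcg wc"
  proof (rule lcg_local)
    show "wc i * wc (Suc (Suc i)) \<le> wc (Suc i) * wc (Suc i)" for i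
      unfolding wc_def by (rule w_loc[OF n1])
    show "wc (Suc k) = 0" if "wc k = 0" for k
      using that by (auto simp: wc_def binomial_eq_0_iff split: if_splits)
  qed
  moreover have "0 < wc 0" by (simp add: wc_def)
  ultimately show ?case using cw by simp
next
  case (Suc m)
  let ?P = "[:2,1:]^m * ([:1,1:]^n + monom 1 (n-1)) :: nat poly"
  have eq: "[:2,1:]^Suc m * ([:1,1:]^n + monom 1 (n-1)) = [:2,1:] * ?P" by (simp only: power_Suc mult.assoc)
  have c: "coeff ([:2,1:] * ?P) = (\<lambda>k. 2 * coeff ?P k + (case k of 0 \<Rightarrow> 0 | Suc k' \<Rightarrow> coeff ?P k'))"
    by (rule ext) (rule coeff_lin_mult)
  show ?case unfolding eq c using Suc.IH lcg_lin[of "coeff ?P" 2] by simp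
qed

lemma fr_unimodal:
  assumes n1: "n \<ge> 1"
  shows "unimodal (total_dom_poly (fr_verts n) fr_adj)"
proof -
  let ?G = "[:2,1:]^n * ([:1,1:]^n + monom 1 (n-1)) :: nat poly"
  have G: "lcg (coeff ?G)" "0 < coeff ?G 0" using fr_G[OF n1, of n] by auto
  have ev: "coeff ?G k = 0" if "Suc (degree ?G) \<le> k" for k
    using that by (simp add: coeff_eq_0)
  obtain m where m: "\<forall>i<m. coeff ?G i \<le> coeff ?G (Suc i)" "\<forall>i\<ge>m. coeff ?G (Suc i) \<le> coeff ?G i"
    using lcg_unimodal[OF G ev] by blast
  have c: "coeff (total_dom_poly (fr_verts n) fr_adj) k = (if k < n+1 then 0 else coeff ?G (k - (n+1)))" for k
    unfolding fr_poly[OF n1] by (simp add: coeff_monom_mult)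
  show ?thesis
  proof (rule unimodal_steps[where m = "m + (n+1)"], unfold c)
    fix i assume i: "i < m + (n+1)"
    show "(if i < n+1 then 0 else coeff ?G (i - (n+1))) \<le> (if Suc i < n+1 then 0 else coeff ?G (Suc i - (n+1)))"
    proof (cases "i < n+1")
      case True
      then show ?thesis by simp
    next
      case False
      then have "Suc i - (n+1) = Suc (i - (n+1))" by simp
      then show ?thesis using m(1) i False by simp
    qed
  next
    fix i assume i: "m + (n+1) \<le> i"
    then have "Suc i - (n+1) = Suc (i - (n+1))" by simp
    then show "(if Suc i < n+1 then 0 else coeff ?G (Suc i - (n+1))) \<le> (if i < n+1 then 0 else coeff ?G (i - (n+1)))"
      using m(2) i by simp
  qed
qed


theorem mainTheorem10:
  fixes n :: nat
  assumes "n \<ge> 1"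
  shows "unimodal (total_dom_poly (book_verts n) book_adj) \<and>
         unimodal (total_dom_poly (fr_verts n) fr_adj)"
  using book_unimodal[OF assms] fr_unimodal[OF assms] by simp

end
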